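(* Let $\boldsymbol\mu>\mathbf 0$ and assume $N\geq 2$ and every matrix in $\mathcal Z(\boldsymbol\mu)$ is irreducible. Run the following iteration: choose $\mathbf p^{(0)}\in\mathbb R^N$ with $\mathbf p^{(0)}>\mathbf 0$; for $k=0,1,2,\dots$ set $y_i^{(k)}=\max_{k_i\in\mathcal K_i}\big(\mathbf e_i^T-\mathbf a_i^{k_i}(\boldsymbol\mu)\big)\mathbf p^{(k)}$ for $i=1,\dots,N$, $\beta^{(k)}=\min_{1\le i\le N}p_i^{(k)}/y_i^{(k)}$, and $\mathbf p^{(k+1)}=\mathbf y^{(k)}/\|\mathbf y^{(k)}\|$. Then the sequence $(\beta^{(k)})_k$ is monotonically nondecreasing and bounded above by $1/\max_{\mathbf Z\in\mathcal Z(\boldsymbol\mu)}\lambda(\mathbf Z)=1/\max_{\mathbf G\in\mathcal G(\boldsymbol\mu)}\lambda(\mathbf I-\mathbf G)$; hence it converges.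
   Context: Multicast system: $N$ transmitters; transmitter $T_i$ has $K_i\geq1$ receivers $R_i^{k}$, $k\in\mathcal K_i=\{1,\dots,K_i\}$. Channel gains $g_{r_i^{k},t_j}\geq 0$ (from $T_j$ to $R_i^k$) with $g_{r_i^{k},t_i}>0$. For $\boldsymbol\mu\in\mathbb R^N$, $\mathbf a_i^{k}(\boldsymbol\mu)\in\mathbb R^{1\times N}$ is the row vector with $i$-th entry $1$ and $j$-th entry $-\mu_i g_{r_i^{k},t_j}/g_{r_i^{k},t_i}$ for $j\neq i$. $\mathcal G(\boldsymbol\mu)$ is the set of $N\times N$ matrices whose $i$-th row is $\mathbf a_i^{k_i}(\boldsymbol\mu)$ for some choice $k_i\in\mathcal K_i$, and $\mathcal Z(\boldsymbol\mu)=\{\mathbf I-\mathbf G:\mathbf G\in\mathcal G(\boldsymbol\mu)\}$ (a set of nonnegative matrices). $\mathbf e_i$ is the $i$-th standard basis column vector, $\|\cdot\|$ the Euclidean norm, $\lambda(\cdot)$ the Perron–Frobenius eigenvalue (spectral radius). *)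

theory Defs
  imports "HOL-Analysis.Analysis" "Jordan_Normal_Form.Spectral_Radius"
begin

text \<open>Indexing conventions: transmitters are 0,...,N-1; receivers of transmitter i are
  1,...,K i; g i k j is the gain from T_j to R_i^k; mu i is the i-th entry of mu.
  Vectors in R^N are functions nat => real, only arguments below N matter.\<close>

definition avec :: "(nat \<Rightarrow> nat \<Rightarrow> nat \<Rightarrow> real) \<Rightarrow> (nat \<Rightarrow> real) \<Rightarrow> nat \<Rightarrow> nat \<Rightarrow> nat \<Rightarrow> real" where
  "avec g mu i k j = (if j = i then 1 else - mu i * g i k j / g i k i)"

definition Gset :: "nat \<Rightarrow> (nat \<Rightarrow> nat) \<Rightarrow> (nat \<Rightarrow> nat \<Rightarrow> nat \<Rightarrow> real) \<Rightarrow> (nat \<Rightarrow> real) \<Rightarrow> real mat set" where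
  "Gset N K g mu = {mat N N (\<lambda>(i, j). avec g mu i (c i) j) | c. \<forall>i<N. c i \<in> {1..K i}}"

definition Zset :: "nat \<Rightarrow> (nat \<Rightarrow> nat) \<Rightarrow> (nat \<Rightarrow> nat \<Rightarrow> nat \<Rightarrow> real) \<Rightarrow> (nat \<Rightarrow> real) \<Rightarrow> real mat set" where
  "Zset N K g mu = {1\<^sub>m N - G | G. G \<in> Gset N K g mu}"

definition irreducible_mat :: "real mat \<Rightarrow> bool" where
  "irreducible_mat A = (\<not> (\<exists>S. S \<noteq> {} \<and> S \<subset> {0..<dim_row A} \<and>
      (\<forall>i\<in>S. \<forall>j\<in>{0..<dim_row A} - S. A $$ (i, j) = 0)))"

definition lam :: "real mat \<Rightarrow> real" where
  "lam Z = spectral_radius (map_mat complex_of_real Z)"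

definition evec :: "nat \<Rightarrow> nat \<Rightarrow> real" where
  "evec i j = (if j = i then 1 else 0)"

definition iter_y :: "nat \<Rightarrow> (nat \<Rightarrow> nat) \<Rightarrow> (nat \<Rightarrow> nat \<Rightarrow> nat \<Rightarrow> real) \<Rightarrow> (nat \<Rightarrow> real) \<Rightarrow> (nat \<Rightarrow> real) \<Rightarrow> nat \<Rightarrow> real" where
  "iter_y N K g mu p i = Max {(\<Sum>j<N. (evec i j - avec g mu i k j) * p j) | k. k \<in> {1..K i}}"

definition iter_beta :: "nat \<Rightarrow> (nat \<Rightarrow> nat) \<Rightarrow> (nat \<Rightarrow> nat \<Rightarrow> nat \<Rightarrow> real) \<Rightarrow> (nat \<Rightarrow> real) \<Rightarrow> (nat \<Rightarrow> real) \<Rightarrow> real" where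
  "iter_beta N K g mu p = Min {p i / iter_y N K g mu p i | i. i < N}"

definition vnorm :: "nat \<Rightarrow> (nat \<Rightarrow> real) \<Rightarrow> real" where
  "vnorm N x = sqrt (\<Sum>i<N. (x i)\<^sup>2)"

end

theory Submission
  imports Defs
begin

lemma cw_upper:
  fixes A :: "real mat"
  assumes A: "A \<in> carrier_mat n n" and n: "n > 0"
    and nonneg: "\<forall>i<n. \<forall>j<n. A$$(i,j) \<ge> 0"
    and ppos: "\<forall>i<n. p i > 0"
    and bound: "\<forall>i<n. (\<Sum>j<n. A$$(i,j) * p j) \<le> t * p i"
  shows "lam A \<le> t"
proof -
  define Ac where "Ac = map_mat complex_of_real A"
  have Ac: "Ac \<in> carrier_mat n n" using A unfolding Ac_def by auto
  obtain mu where mu: "mu \<in> spectrum Ac" and lm: "lam A = norm mu"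
    using spectral_radius_mem_max(1)[OF Ac n] unfolding lam_def Ac_def[symmetric] by auto
  from mu obtain v where ev: "eigenvector Ac v mu" unfolding spectrum_def eigenvalue_def by auto
  hence v: "v \<in> carrier_vec n" and v0: "v \<noteq> 0\<^sub>v n" and Av: "Ac *\<^sub>v v = mu \<cdot>\<^sub>v v"
    unfolding eigenvector_def using Ac by auto
  define r where "r i = norm (v$i) / p i" for i
  define m where "m = Max (r ` {..<n})"
  have fin: "finite (r ` {..<n})" "r ` {..<n} \<noteq> {}" using n by auto
  obtain i0 where i0: "i0 < n" "r i0 = m" using Max_in[OF fin] unfolding m_def by auto
  have rle: "norm (v$j) \<le> m * p j" if "j < n" for j
  proof -
    have "r j \<le> m" unfolding m_def using that fin by auto
    thus ?thesis using ppos that unfolding r_def by (simp add: divide_le_eq)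
  qed
  obtain j where j: "j < n" "v$j \<noteq> 0"
  proof (rule ccontr)
    assume "\<not> thesis"
    with that have "\<forall>j<n. v$j = 0" by blast
    hence "v = 0\<^sub>v n" using v by (intro eq_vecI) auto
    with v0 show False by simp
  qed
  have mpos: "m > 0"
  proof -
    have "r j > 0" unfolding r_def using j ppos by auto
    moreover have "r j \<le> m" unfolding m_def using j fin by auto
    ultimately show ?thesis by simp
  qed
  have vi0: "norm (v$i0) = m * p i0" using i0 ppos unfolding r_def by (auto simp: field_simps)
  have "mu * v$i0 = (Ac *\<^sub>v v)$i0" using Av i0 v by simp
  also have "\<dots> = (\<Sum>j<n. complex_of_real (A$$(i0,j)) * v$j)"
    using i0 Ac v A unfolding Ac_def by (auto simp: scalar_prod_def lessThan_atLeast0 intro!: sum.cong)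
  finally have eq: "mu * v$i0 = (\<Sum>j<n. complex_of_real (A$$(i0,j)) * v$j)" .
  have "norm mu * norm (v$i0) = norm (\<Sum>j<n. complex_of_real (A$$(i0,j)) * v$j)"
    using eq by (metis norm_mult)
  also have "\<dots> \<le> (\<Sum>j<n. norm (complex_of_real (A$$(i0,j)) * v$j))" by (rule norm_sum)
  also have "\<dots> = (\<Sum>j<n. A$$(i0,j) * norm (v$j))"
    using nonneg i0 by (intro sum.cong) (auto simp: norm_mult)
  also have "\<dots> \<le> (\<Sum>j<n. A$$(i0,j) * (m * p j))"
    using nonneg i0 rle by (intro sum_mono mult_left_mono) auto
  also have "\<dots> = m * (\<Sum>j<n. A$$(i0,j) * p j)" by (simp add: sum_distrib_left mult_ac)
  also have "\<dots> \<le> m * (t * p i0)" using bound i0 mpos by (intro mult_left_mono) auto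
  also have "\<dots> = t * norm (v$i0)" using vi0 by simp
  finally have "norm mu * norm (v$i0) \<le> t * norm (v$i0)" .
  moreover have "norm (v$i0) > 0" using vi0 mpos ppos i0 by simp
  ultimately show ?thesis using lm by simp
qed

lemma lam_nonneg: "A \<in> carrier_mat n n \<Longrightarrow> n > 0 \<Longrightarrow> lam A \<ge> 0"
  unfolding lam_def using spectral_radius_mem_max(1)[of "map_mat complex_of_real A" n] by auto

lemma cw_lower_pos:
  fixes A :: "real mat"
  assumes A: "A \<in> carrier_mat n n" and n: "n > 0"
    and nonneg: "\<forall>i<n. \<forall>j<n. A$$(i,j) \<ge> 0"
    and ppos: "\<forall>i<n. p i > 0"
    and lower: "\<forall>i<n. (\<Sum>j<n. A$$(i,j) * p j) \<ge> a * p i" and a: "a > 0"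
  shows "lam A > 0"
proof (rule ccontr)
  assume "\<not> lam A > 0"
  hence l0: "lam A \<le> 0" by simp
  define c where "c = 2 / a"
  have c: "c > 0" using a unfolding c_def by simp
  define M where "M = c \<cdot>\<^sub>m A"
  have M: "M \<in> carrier_mat n n" using A unfolding M_def by auto
  have Mij: "M$$(i,j) = c * A$$(i,j)" if "i<n" "j<n" for i j
    using that A unfolding M_def by auto
  define Mc where "Mc = map_mat complex_of_real M"
  define Ac where "Ac = map_mat complex_of_real A"
  have Mc: "Mc \<in> carrier_mat n n" using M unfolding Mc_def by auto
  have Ac: "Ac \<in> carrier_mat n n" using A unfolding Ac_def by auto
  have "spectral_radius Mc < 1"
  proof -
    obtain nu where nu: "nu \<in> spectrum Mc" and lm: "spectral_radius Mc = norm nu"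
      using spectral_radius_mem_max(1)[OF Mc n] by auto
    from nu obtain v where ev: "eigenvector Mc v nu" unfolding spectrum_def eigenvalue_def by auto
    hence v: "v \<in> carrier_vec n" and v0: "v \<noteq> 0\<^sub>v n" and Mv: "Mc *\<^sub>v v = nu \<cdot>\<^sub>v v"
      unfolding eigenvector_def using Mc by auto
    have "Ac *\<^sub>v v = (nu / complex_of_real c) \<cdot>\<^sub>v v"
    proof (rule eq_vecI)
      fix i assume "i < dim_vec ((nu / complex_of_real c) \<cdot>\<^sub>v v)"
      hence i: "i < n" using v by simp
      have "nu * v$i = (Mc *\<^sub>v v)$i" using Mv i v by simp
      also have "\<dots> = (\<Sum>j<n. complex_of_real (c * A$$(i,j)) * v$j)"
        using i Mc v M Mij unfolding Mc_def by (auto simp: scalar_prod_def lessThan_atLeast0 intro!: sum.cong)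
      also have "\<dots> = complex_of_real c * (\<Sum>j<n. complex_of_real (A$$(i,j)) * v$j)"
        by (simp add: sum_distrib_left mult_ac)
      also have "(\<Sum>j<n. complex_of_real (A$$(i,j)) * v$j) = (Ac *\<^sub>v v)$i"
        using i Ac v A unfolding Ac_def by (auto simp: scalar_prod_def lessThan_atLeast0 intro!: sum.cong)
      finally show "(Ac *\<^sub>v v)$i = ((nu / complex_of_real c) \<cdot>\<^sub>v v)$i"
        using i v c by (simp add: field_simps)
    qed (insert v Ac, auto)
    hence "eigenvector Ac v (nu / complex_of_real c)" using v v0 Ac unfolding eigenvector_def by auto
    hence "norm (nu / complex_of_real c) \<in> norm ` spectrum Ac"
      unfolding spectrum_def eigenvalue_def by auto
    from spectral_radius_mem_max(2)[OF Ac n this] l0 have "norm (nu / complex_of_real c) \<le> 0"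
      unfolding lam_def Ac_def by linarith
    hence "nu = 0" using c by simp
    thus ?thesis using lm by simp
  qed
  from spectral_radius_jnf_norm_bound_less_1_upper_triangular[OF Mc this]
  obtain C where C: "\<And>k. norm_bound (Mc ^\<^sub>m k) C" by auto
  have Cb: "\<bar>(M ^\<^sub>m k)$$(i,j)\<bar> \<le> C" if "i<n" "j<n" for i j k
  proof -
    have "Mc ^\<^sub>m k = map_mat complex_of_real (M ^\<^sub>m k)"
      unfolding Mc_def by (rule of_real_hom.mat_hom_pow[OF M, symmetric])
    with C[of k] that M show ?thesis unfolding norm_bound_def by auto
  qed
  have ind: "(\<forall>i<n. \<forall>j<n. (M ^\<^sub>m k)$$(i,j) \<ge> 0) \<and>
     (\<forall>i<n. (\<Sum>j<n. (M ^\<^sub>m k)$$(i,j) * p j) \<ge> 2^k * p i)" for k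
  proof (induction k)
    case 0
    show ?case
    proof (intro conjI allI impI)
      fix i j assume "i<n" "j<n" thus "(M ^\<^sub>m 0)$$(i,j) \<ge> 0" using M by auto
    next
      fix i assume i: "i<n"
      have "(\<Sum>j<n. (M ^\<^sub>m 0)$$(i,j) * p j) = (\<Sum>j<n. if j = i then p i else 0)"
        using M i by (intro sum.cong) auto
      also have "\<dots> = p i" using i by (simp add: sum.delta)
      finally show "(\<Sum>j<n. (M ^\<^sub>m 0)$$(i,j) * p j) \<ge> 2^0 * p i" by simp
    qed
  next
    case (Suc k)
    have Mk: "M ^\<^sub>m k \<in> carrier_mat n n" using M by simp
    have ent: "(M ^\<^sub>m Suc k)$$(i,j) = (\<Sum>l<n. (M ^\<^sub>m k)$$(i,l) * M$$(l,j))" if "i<n" "j<n" for i j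
      using that Mk M by (auto simp: scalar_prod_def lessThan_atLeast0 intro!: sum.cong)
    have Mrow: "(\<Sum>j<n. M$$(l,j) * p j) \<ge> 2 * p l" if "l<n" for l
    proof -
      have "(\<Sum>j<n. M$$(l,j) * p j) = c * (\<Sum>j<n. A$$(l,j) * p j)"
        using that Mij by (simp add: sum_distrib_left mult_ac)
      also have "\<dots> \<ge> c * (a * p l)" using lower that c by (intro mult_left_mono) auto
      finally show ?thesis using a unfolding c_def by simp
    qed
    show ?case
    proof (intro conjI allI impI)
      fix i j assume "i<n" "j<n"
      thus "(M ^\<^sub>m Suc k)$$(i,j) \<ge> 0" using ent Suc.IH Mij nonneg c
        by (auto intro!: sum_nonneg)
    next
      fix i assume i: "i<n"
      have "(\<Sum>j<n. (M ^\<^sub>m Suc k)$$(i,j) * p j) = (\<Sum>j<n. \<Sum>l<n. (M ^\<^sub>m k)$$(i,l) * M$$(l,j) * p j)"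
        using ent i by (auto simp: sum_distrib_right intro!: sum.cong)
      also have "\<dots> = (\<Sum>l<n. (M ^\<^sub>m k)$$(i,l) * (\<Sum>j<n. M$$(l,j) * p j))"
        by (subst sum.swap) (simp add: sum_distrib_left mult_ac)
      also have "\<dots> \<ge> (\<Sum>l<n. (M ^\<^sub>m k)$$(i,l) * (2 * p l))"
        using Suc.IH i Mrow by (intro sum_mono mult_left_mono) auto
      finally have "(\<Sum>j<n. (M ^\<^sub>m Suc k)$$(i,j) * p j) \<ge> 2 * (\<Sum>l<n. (M ^\<^sub>m k)$$(i,l) * p l)"
        by (simp add: sum_distrib_left mult_ac)
      moreover have "2 * (\<Sum>l<n. (M ^\<^sub>m k)$$(i,l) * p l) \<ge> 2 * (2^k * p i)"
        using Suc.IH i by simp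
      ultimately show "(\<Sum>j<n. (M ^\<^sub>m Suc k)$$(i,j) * p j) \<ge> 2^Suc k * p i" by simp
    qed
  qed
  define S where "S = (\<Sum>j<n. p j)"
  have p0: "p 0 > 0" using ppos n by simp
  have bd: "2^k * p 0 \<le> C * S" for k
  proof -
    have "2^k * p 0 \<le> (\<Sum>j<n. (M ^\<^sub>m k)$$(0,j) * p j)" using ind[of k] n by auto
    also have "\<dots> \<le> (\<Sum>j<n. C * p j)"
      using Cb[of 0 _ k] n ppos by (intro sum_mono mult_right_mono) (auto simp: abs_le_iff less_imp_le)
    finally show ?thesis unfolding S_def by (simp add: sum_distrib_left)
  qed
  obtain k where "C * S / p 0 < (2::real)^k" using real_arch_pow[of 2 "C * S / p 0"] by auto
  hence "C * S < 2^k * p 0" using p0 by (simp add: divide_less_eq)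
  with bd[of k] show False by simp
qed
theorem lemma3:
  fixes N :: nat and K :: "nat \<Rightarrow> nat" and g :: "nat \<Rightarrow> nat \<Rightarrow> nat \<Rightarrow> real"
    and mu :: "nat \<Rightarrow> real" and p :: "nat \<Rightarrow> nat \<Rightarrow> real"
  assumes K_pos: "\<forall>i<N. K i \<ge> 1"
    and g_nonneg: "\<forall>i<N. \<forall>k\<in>{1..K i}. \<forall>j<N. g i k j \<ge> 0"
    and g_diag_pos: "\<forall>i<N. \<forall>k\<in>{1..K i}. g i k i > 0"
    and mu_pos: "\<forall>i<N. mu i > 0"
    and N_ge: "N \<ge> 2"
    and irred: "\<forall>Z\<in>Zset N K g mu. irreducible_mat Z"
    and p0_pos: "\<forall>i<N. p 0 i > 0"
    and p_step: "\<forall>k. \<forall>i<N. p (Suc k) i =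
        iter_y N K g mu (p k) i / vnorm N (iter_y N K g mu (p k))"
  shows "mono (\<lambda>k. iter_beta N K g mu (p k))
    \<and> (\<forall>k. iter_beta N K g mu (p k) \<le> 1 / Max (lam ` Zset N K g mu))
    \<and> Max (lam ` Zset N K g mu) = Max ((\<lambda>G. lam (1\<^sub>m N - G)) ` Gset N K g mu)
    \<and> convergent (\<lambda>k. iter_beta N K g mu (p k))"
proof -
  define z where "z i k j = evec i j - avec g mu i k j" for i k j
  define Zc where "Zc c = mat N N (\<lambda>(i,j). z i (c i) j)" for c
  define T where "T q = iter_y N K g mu q" for q
  define B where "B q = iter_beta N K g mu q" for q
  have N0: "N > 0" using N_ge by simp
  have zn: "z i k j \<ge> 0" if "i<N" "k\<in>{1..K i}" "j<N" for i k j
    using that g_nonneg g_diag_pos mu_pos unfolding z_def evec_def avec_def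
    by (auto intro!: divide_nonneg_pos)
  have Zset_eq: "Zset N K g mu = Zc ` {c. \<forall>i<N. c i \<in> {1..K i}}"
  proof -
    have "1\<^sub>m N - mat N N (\<lambda>(i, j). avec g mu i (c i) j) = Zc c" for c
      unfolding Zc_def z_def by (rule eq_matI) (auto simp: evec_def)
    hence eq: "\<And>c. Zc c = 1\<^sub>m N - mat N N (\<lambda>(i, j). avec g mu i (c i) j)" by simp
    show ?thesis unfolding Zset_def Gset_def eq by blast
  qed
  have Zc_car: "Zc c \<in> carrier_mat N N" for c unfolding Zc_def by auto
  have Zc_ent: "Zc c $$ (i,j) = z i (c i) j" if "i<N" "j<N" for c i j
    using that unfolding Zc_def by auto
  have finZ: "finite (Zset N K g mu)"
  proof -
    have "Zset N K g mu \<subseteq> Zc ` (Pi\<^sub>E {..<N} (\<lambda>i. {1..K i}))"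
    proof
      fix Z assume "Z \<in> Zset N K g mu"
      then obtain c where c: "\<forall>i<N. c i \<in> {1..K i}" and Z: "Z = Zc c" unfolding Zset_eq by auto
      have "Zc c = Zc (restrict c {..<N})" unfolding Zc_def by (rule eq_matI) auto
      moreover have "restrict c {..<N} \<in> Pi\<^sub>E {..<N} (\<lambda>i. {1..K i})" using c by auto
      ultimately show "Z \<in> Zc ` (Pi\<^sub>E {..<N} (\<lambda>i. {1..K i}))" using Z by blast
    qed
    moreover have "finite (Zc ` (Pi\<^sub>E {..<N} (\<lambda>i. {1..K i})))" by (intro finite_imageI finite_PiE) auto
    ultimately show ?thesis by (rule finite_subset)
  qed
  define c1 where "c1 = (\<lambda>i::nat. 1::nat)"
  have c1: "\<forall>i<N. c1 i \<in> {1..K i}" using K_pos unfolding c1_def by auto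
  have Z1: "Zc c1 \<in> Zset N K g mu" unfolding Zset_eq using c1 by blast
  have Tset: "{(\<Sum>j<N. (evec i j - avec g mu i k j) * q j) | k. k \<in> {1..K i}}
      = (\<lambda>k. \<Sum>j<N. z i k j * q j) ` {1..K i}" for i q
    unfolding z_def by auto
  have T1: "(\<Sum>j<N. z i k j * q j) \<le> T q i" if "k \<in> {1..K i}" for i k q
    unfolding T_def iter_y_def Tset using that by (intro Max_ge) auto
  have T2: "\<exists>k\<in>{1..K i}. T q i = (\<Sum>j<N. z i k j * q j)" if "i<N" for i q
  proof -
    have "finite ((\<lambda>k. \<Sum>j<N. z i k j * q j) ` {1..K i})" "(\<lambda>k. \<Sum>j<N. z i k j * q j) ` {1..K i} \<noteq> {}"
      using K_pos that by auto
    from Max_in[OF this] show ?thesis unfolding T_def iter_y_def Tset by auto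
  qed
  have T0: "T q i = T q' i" if "\<forall>j<N. q j = q' j" for q q' i
    unfolding T_def iter_y_def using that by (auto intro!: arg_cong[where f=Max] sum.cong)
  have T4: "T q i \<le> T q' i" if "i<N" "\<forall>j<N. q j \<le> q' j" for q q' i
  proof -
    obtain k where k: "k\<in>{1..K i}" "T q i = (\<Sum>j<N. z i k j * q j)" using T2[of i q] \<open>i<N\<close> by blast
    have "(\<Sum>j<N. z i k j * q j) \<le> (\<Sum>j<N. z i k j * q' j)"
      using that k zn by (intro sum_mono mult_left_mono) auto
    also have "\<dots> \<le> T q' i" using T1 k by blast
    finally show ?thesis using k by simp
  qed
  have T5: "T (\<lambda>j. a * q j) i = a * T q i" if "i<N" "a > 0" for q a i
  proof (rule antisym)
    obtain k where k: "k\<in>{1..K i}" "T (\<lambda>j. a * q j) i = (\<Sum>j<N. z i k j * (a * q j))"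
      using T2[of i] \<open>i<N\<close> by blast
    have "(\<Sum>j<N. z i k j * (a * q j)) = a * (\<Sum>j<N. z i k j * q j)"
      by (simp add: sum_distrib_left mult_ac)
    also have "\<dots> \<le> a * T q i" using T1[OF k(1)] that by (intro mult_left_mono) auto
    finally show "T (\<lambda>j. a * q j) i \<le> a * T q i" using k by simp
  next
    obtain k where k: "k\<in>{1..K i}" "T q i = (\<Sum>j<N. z i k j * q j)"
      using T2[of i] \<open>i<N\<close> by blast
    have "a * T q i = (\<Sum>j<N. z i k j * (a * q j))"
      using k by (simp add: sum_distrib_left mult_ac)
    also have "\<dots> \<le> T (\<lambda>j. a * q j) i" by (rule T1[OF k(1), of "\<lambda>j. a * q j"])
    finally show "a * T q i \<le> T (\<lambda>j. a * q j) i" .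
  qed
  have offdiag: "\<exists>j<N. j \<noteq> i \<and> z i 1 j > 0" if i: "i<N" for i
  proof -
    have irr: "irreducible_mat (Zc c1)" using irred Z1 by blast
    have dim: "dim_row (Zc c1) = N" using Zc_car[of c1] by simp
    obtain j0 where j0: "j0 < N" "j0 \<noteq> i"
    proof (cases "i = 0")
      case True then show ?thesis using N_ge by (intro that[of 1]) auto
    next
      case False then show ?thesis using i by (intro that[of 0]) auto
    qed
    have sub: "{i} \<subset> {0..<N}"
    proof -
      have "{i} \<subseteq> {0..<N}" using i by simp
      moreover have "j0 \<in> {0..<N}" "j0 \<notin> {i}" using j0 by auto
      ultimately show ?thesis by blast
    qed
    have "\<exists>j\<in>{0..<N} - {i}. Zc c1 $$ (i,j) \<noteq> 0"
    proof (rule ccontr)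
      assume "\<not> ?thesis"
      hence "\<forall>i'\<in>{i}. \<forall>j\<in>{0..<dim_row (Zc c1)} - {i}. Zc c1 $$ (i',j) = 0" using dim by auto
      hence "\<exists>S. S \<noteq> {} \<and> S \<subset> {0..<dim_row (Zc c1)} \<and>
        (\<forall>i\<in>S. \<forall>j\<in>{0..<dim_row (Zc c1)} - S. Zc c1 $$ (i, j) = 0)"
        using sub dim by (intro exI[of _ "{i}"]) simp
      with irr show False unfolding irreducible_mat_def by simp
    qed
    then obtain j where j: "j \<in> {0..<N} - {i}" "Zc c1 $$ (i,j) \<noteq> 0" by blast
    hence "z i 1 j \<noteq> 0" using Zc_ent i unfolding c1_def by auto
    moreover have "z i 1 j \<ge> 0" using zn[of i 1 j] i j K_pos by auto
    ultimately show ?thesis using j by (intro exI[of _ j]) auto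
  qed
  have Tpos: "T q i > 0" if i: "i<N" and q: "\<forall>j<N. q j > 0" for q i
  proof -
    obtain j where j: "j<N" "j\<noteq>i" "z i 1 j > 0" using offdiag[OF i] by blast
    have "0 < z i 1 j * q j" using j q by simp
    also have "\<dots> \<le> (\<Sum>j<N. z i 1 j * q j)"
      using j q zn[of i 1] i K_pos by (intro member_le_sum) (auto intro!: mult_nonneg_nonneg simp: order.strict_implies_order)
    also have "\<dots> \<le> T q i" using T1[of 1 i] K_pos i by auto
    finally show ?thesis .
  qed
  have Bset: "{q i / T q i | i. i < N} = (\<lambda>i. q i / T q i) ` {..<N}" for q by auto
  have B1: "B q \<le> q i / T q i" if "i<N" for q i
    unfolding B_def iter_beta_def T_def[symmetric] Bset using that by (intro Min_le) auto
  have B2: "\<exists>i<N. B q = q i / T q i" for q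
  proof -
    have "finite ((\<lambda>i. q i / T q i) ` {..<N})" "(\<lambda>i. q i / T q i) ` {..<N} \<noteq> {}" using N0 by auto
    from Min_in[OF this] show ?thesis unfolding B_def iter_beta_def T_def[symmetric] Bset by auto
  qed
  have Bpos: "B q > 0" if "\<forall>j<N. q j > 0" for q
    using B2[of q] Tpos[of _ q] that by auto
  have BT: "T q i \<le> q i / B q" if "i<N" "\<forall>j<N. q j > 0" for q i
  proof -
    have "B q * T q i \<le> q i" using B1[OF that(1), of q] Tpos[OF that] by (simp add: le_divide_eq)
    thus ?thesis using Bpos[OF that(2)] by (simp add: le_divide_eq mult_ac)
  qed
  have ppos: "\<forall>i<N. p k i > 0" for k
  proof (induction k)
    case 0 show ?case using p0_pos by simp
  next
    case (Suc k)
    have "0 < (T (p k) 0)\<^sup>2" using Tpos[OF N0 Suc.IH] by simp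
    also have "\<dots> \<le> (\<Sum>i<N. (T (p k) i)\<^sup>2)" using N0 by (intro member_le_sum) auto
    finally have "vnorm N (T (p k)) > 0" unfolding vnorm_def by simp
    thus ?case using p_step Tpos[OF _ Suc.IH] unfolding T_def by auto
  qed
  have step: "B (p k) \<le> B (p (Suc k))" for k
  proof -
    let ?q = "p k" and ?b = "B (p k)"
    define s where "s = vnorm N (T ?q)"
    have s: "s > 0"
    proof -
      have "0 < (T (p k) 0)\<^sup>2" using Tpos[OF N0 ppos[of k]] by simp
      also have "\<dots> \<le> (\<Sum>i<N. (T (p k) i)\<^sup>2)" using N0 by (intro member_le_sum) auto
      finally show ?thesis unfolding vnorm_def s_def by simp
    qed
    have b: "?b > 0" using Bpos ppos by blast
    have qT: "\<forall>j<N. ?b * T ?q j \<le> ?q j"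
    proof (intro allI impI)
      fix j assume j: "j<N"
      have "T ?q j \<le> ?q j / ?b" using BT[OF j ppos[of k]] .
      thus "?b * T ?q j \<le> ?q j" using b by (simp add: le_divide_eq mult_ac)
    qed
    have TT: "?b * T (T ?q) i \<le> T ?q i" if "i<N" for i
    proof -
      have "?b * T (T ?q) i = T (\<lambda>j. ?b * T ?q j) i" using T5[OF that b] by simp
      also have "\<dots> \<le> T ?q i" using T4[OF that qT] .
      finally show ?thesis .
    qed
    have pS: "\<forall>j<N. p (Suc k) j = (1/s) * T ?q j" using p_step unfolding T_def s_def by auto
    have TpS: "T (p (Suc k)) i = (1/s) * T (T ?q) i" if "i<N" for i
      using T0[OF pS] T5[OF that, of "1/s"] s by simp
    obtain i where i: "i<N" "B (p (Suc k)) = p (Suc k) i / T (p (Suc k)) i" using B2 by blast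
    have "B (p (Suc k)) = T ?q i / T (T ?q) i" using i pS TpS s by simp
    moreover have "T (T ?q) i > 0" using Tpos[OF i(1)] Tpos ppos by blast
    ultimately show ?thesis using TT[OF i(1)] by (simp add: le_divide_eq)
  qed
  have lamle: "lam Z \<le> 1 / B (p k)" if "Z \<in> Zset N K g mu" for Z k
  proof -
    from that obtain c where c: "\<forall>i<N. c i \<in> {1..K i}" and Z: "Z = Zc c" unfolding Zset_eq by auto
    show ?thesis unfolding Z
    proof (rule cw_upper[OF Zc_car N0 _ ppos])
      show "\<forall>i<N. \<forall>j<N. 0 \<le> Zc c $$ (i, j)" using Zc_ent zn c by auto
      show "\<forall>i<N. (\<Sum>j<N. Zc c $$ (i, j) * p k j) \<le> 1 / B (p k) * p k i"
      proof (intro allI impI)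
        fix i assume i: "i<N"
        have "(\<Sum>j<N. Zc c $$ (i, j) * p k j) = (\<Sum>j<N. z i (c i) j * p k j)"
          using Zc_ent i by auto
        also have "\<dots> \<le> T (p k) i" using T1 c i by blast
        also have "\<dots> \<le> p k i / B (p k)" using BT i ppos by blast
        finally show "(\<Sum>j<N. Zc c $$ (i, j) * p k j) \<le> 1 / B (p k) * p k i" by simp
      qed
    qed
  qed
  define Mx where "Mx = Max (lam ` Zset N K g mu)"
  have Mxpos: "Mx > 0"
  proof -
    define a where "a = Min ((\<lambda>i. \<Sum>j<N. z i 1 j) ` {..<N})"
    have rowpos: "(\<Sum>j<N. z i 1 j) > 0" if ii: "i<N" for i
    proof -
      obtain j where j: "j<N" "j\<noteq>i" "z i 1 j > 0" using offdiag[OF ii] by blast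
      have "z i 1 j \<le> (\<Sum>j<N. z i 1 j)"
        using j zn[of i 1] ii K_pos by (intro member_le_sum) auto
      thus ?thesis using j by simp
    qed
    have "lam (Zc c1) > 0"
    proof (rule cw_lower_pos[OF Zc_car N0, where p="\<lambda>_. 1" and a=a])
      show "\<forall>i<N. \<forall>j<N. 0 \<le> Zc c1 $$ (i, j)" using Zc_ent zn c1 by auto
      show "\<forall>i<N. (0::real) < 1" by simp
      have "finite ((\<lambda>i. \<Sum>j<N. z i 1 j) ` {..<N})" "(\<lambda>i. \<Sum>j<N. z i 1 j) ` {..<N} \<noteq> {}" using N0 by auto
      from Min_in[OF this] rowpos show "a > 0" unfolding a_def by auto
      show "\<forall>i<N. a * 1 \<le> (\<Sum>j<N. Zc c1 $$ (i, j) * 1)"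
        using Zc_ent unfolding a_def c1_def by (auto intro!: Min_le)
    qed
    moreover have "lam (Zc c1) \<le> Mx" unfolding Mx_def using finZ Z1 by auto
    ultimately show ?thesis by simp
  qed
  have bound: "B (p k) \<le> 1 / Mx" for k
  proof -
    have "Mx \<in> lam ` Zset N K g mu" unfolding Mx_def using finZ Z1 by (intro Max_in) auto
    then obtain Z where "Z \<in> Zset N K g mu" "Mx = lam Z" by auto
    hence "Mx \<le> 1 / B (p k)" using lamle by simp
    thus ?thesis using Mxpos Bpos ppos by (simp add: le_divide_eq mult_ac)
  qed
  have inc: "incseq (\<lambda>k. B (p k))" using step by (rule incseq_SucI)
  have conv: "convergent (\<lambda>k. B (p k))"
    using incseq_convergent[OF inc, of "1/Mx"] bound unfolding convergent_def by blast
  have eqM: "lam ` Zset N K g mu = (\<lambda>G. lam (1\<^sub>m N - G)) ` Gset N K g mu"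
    unfolding Zset_def by auto
  show ?thesis using inc conv bound eqM unfolding B_def Mx_def by simp
qed

end
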